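(* For any choice function $\tau$ and any minimal choice of horizontal edges $\mathcal H=\mathcal H^{\min}$, the homomorphism $\varphi_{\tau,\mathcal H}: C(X,\mathbb{Z})\cong K_0(C(X))\to\mathbb{Z}$ is non-trivial. In particular, the $K$-homology class of a Pearson–Bellissard spectral triple is never trivial.
   Context: Let $(X,d)$ be an infinite compact ultrametric space, identified with the boundary $\partial\mathcal{T}$ (infinite paths from the root) of its Michon tree $\mathcal{T}=(\mathcal{T}^{(0)},\mathcal{T}^{(1)})$, whose level-$n$ vertices are the balls of the $n$-th radius in the image of $d$. For a vertex $v$ let $\mathcal{T}^{(0)}(v)$ be its set of immediate successors and $\chi_v$ the indicator function of the set of infinite paths through $v$. A minimal choice of horizontal edges $\mathcal H^{\min}$ consists, for each branching vertex $v$, of two distinct vertices of $\mathcal{T}^{(0)}(v)$ linked by two edges (one in each direction). A choice function $\tau:\mathcal{T}^{(0)}\to\partial\mathcal{T}$ satisfies: $\tau(v)$ passes through $v$, and if $w\prec v$ then $\tau(w)=\tau(v)$ iff $\tau(w)$ passes through $v$. Fix an orientation $\mathcal H=\mathcal H^+\cup\mathcal H^-$. The spectral triple on $\ell^2(\mathcal H)=\ell^2(\mathcal H^+)\oplus\ell^2(\mathcal H^-)$ with representation $\pi_\tau(f)\psi(h)=f(\tau(s(h)))\psi(h)$ and Dirac operator $D\psi(h)=\delta(h)^{-1}\psi(h^{\mathrm{op}})$ (this is the Pearson–Bellissard triple when $\mathcal H=\mathcal H^{\min}$) gives the even Fredholm module with $F=\mathrm{sign}(D)$, whose off-diagonal part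 $T:\ell^2(\mathcal H^+)\to\ell^2(\mathcal H^-)$ is $T1_h=1_{h^{\mathrm{op}}}$. Its Connes pairing with $K_0$ is $\varphi_{\tau,\mathcal H}(p)=\mathrm{Ind}(\pi_-(p)T\pi_+(p))$, explicitly $\varphi_{\tau,\mathcal H}(\chi_v)=\sum_{h\in\mathcal H^+}\big(\chi_v(\tau(s(h)))-\chi_v(\tau(r(h)))\big)$. *)

theory Defs
  imports "HOL-Analysis.Analysis"
begin

definition ultrametric :: "'a::metric_space set \<Rightarrow> bool" where
  "ultrametric X \<longleftrightarrow> (\<forall>x\<in>X. \<forall>y\<in>X. \<forall>z\<in>X. dist x z \<le> max (dist x y) (dist y z))"

definition dvals :: "'a::metric_space set \<Rightarrow> real set" where
  "dvals X = {dist x y | x y. x \<in> X \<and> y \<in> X}"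

text \<open>The n-th radius: positive values of d listed in decreasing order (n = 0 is the diameter).\<close>
definition rad :: "'a::metric_space set \<Rightarrow> nat \<Rightarrow> real" where
  "rad X n = (THE r. r \<in> dvals X \<and> 0 < r \<and> finite {s \<in> dvals X. r < s}
                     \<and> card {s \<in> dvals X. r < s} = n)"

definition lvl :: "'a::metric_space set \<Rightarrow> nat \<Rightarrow> 'a set set" where
  "lvl X n = {{y \<in> X. dist x y \<le> rad X n} | x. x \<in> X}"

definition mvert :: "'a::metric_space set \<Rightarrow> (nat \<times> 'a set) set" where
  "mvert X = {(n, B). B \<in> lvl X n}"

definition mchildren :: "'a::metric_space set \<Rightarrow> nat \<times> 'a set \<Rightarrow> (nat \<times> 'a set) set" where
  "mchildren X v = {(Suc (fst v), B') | B'. B' \<in> lvl X (Suc (fst v)) \<and> B' \<subseteq> snd v}"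

text \<open>Boundary of the tree: infinite paths from the root.\<close>
definition mpaths :: "'a::metric_space set \<Rightarrow> (nat \<Rightarrow> 'a set) set" where
  "mpaths X = {p. \<forall>n. p n \<in> lvl X n \<and> p (Suc n) \<subseteq> p n}"

definition passes :: "(nat \<Rightarrow> 'a set) \<Rightarrow> nat \<times> 'a set \<Rightarrow> bool" where
  "passes p v \<longleftrightarrow> p (fst v) = snd v"

definition precedes :: "nat \<times> 'a set \<Rightarrow> nat \<times> 'a set \<Rightarrow> bool" where
  "precedes w v \<longleftrightarrow> fst w < fst v \<and> snd v \<subseteq> snd w"

definition choice_fun :: "'a::metric_space set \<Rightarrow> (nat \<times> 'a set \<Rightarrow> (nat \<Rightarrow> 'a set)) \<Rightarrow> bool" where
  "choice_fun X \<tau> \<longleftrightarrow>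
     (\<forall>v\<in>mvert X. \<tau> v \<in> mpaths X \<and> passes (\<tau> v) v) \<and>
     (\<forall>v\<in>mvert X. \<forall>w\<in>mvert X. precedes w v \<longrightarrow> (\<tau> w = \<tau> v \<longleftrightarrow> passes (\<tau> w) v))"

definition branching :: "'a::metric_space set \<Rightarrow> nat \<times> 'a set \<Rightarrow> bool" where
  "branching X v \<longleftrightarrow> v \<in> mvert X \<and> (\<exists>a b. a \<noteq> b \<and> a \<in> mchildren X v \<and> b \<in> mchildren X v)"

text \<open>Minimal choice of horizontal edges; an edge h is a pair (s h, r h), h^op = swap h.\<close>
definition min_horizontal :: "'a::metric_space set \<Rightarrow> ((nat \<times> 'a set) \<times> (nat \<times> 'a set)) set \<Rightarrow> bool" where
  "min_horizontal X H \<longleftrightarrow> (\<exists>sel.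
      (\<forall>v. branching X v \<longrightarrow> fst (sel v) \<noteq> snd (sel v) \<and>
            fst (sel v) \<in> mchildren X v \<and> snd (sel v) \<in> mchildren X v) \<and>
      H = (\<Union>v\<in>{v. branching X v}. {sel v, prod.swap (sel v)}))"

definition orientation :: "('v \<times> 'v) set \<Rightarrow> ('v \<times> 'v) set \<Rightarrow> bool" where
  "orientation H Hp \<longleftrightarrow> Hp \<subseteq> H \<and> (\<forall>h\<in>H. (h \<in> Hp) \<noteq> (prod.swap h \<in> Hp))"

text \<open>C(X,Z) = C(boundary,Z): locally constant integer functions on the path space.\<close>
definition contZ :: "'a::metric_space set \<Rightarrow> ((nat \<Rightarrow> 'a set) \<Rightarrow> int) \<Rightarrow> bool" where
  "contZ X f \<longleftrightarrow> (\<forall>p\<in>mpaths X. \<exists>n. \<forall>q\<in>mpaths X. q n = p n \<longrightarrow> f q = f p)"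

text \<open>phi(f) = sum over H+ of f(tau(s h)) - f(tau(r h)); for f in C(X,Z) only finitely many
  terms are non-zero, and the sum is taken over those.\<close>
definition phi :: "(nat \<times> 'a set \<Rightarrow> (nat \<Rightarrow> 'a set)) \<Rightarrow> ((nat \<times> 'a set) \<times> (nat \<times> 'a set)) set
                   \<Rightarrow> ((nat \<Rightarrow> 'a set) \<Rightarrow> int) \<Rightarrow> int" where
  "phi \<tau> Hp f = (\<Sum>h \<in> {h \<in> Hp. f (\<tau> (fst h)) \<noteq> f (\<tau> (snd h))}. f (\<tau> (fst h)) - f (\<tau> (snd h)))"

end

theory Submission
  imports Defs
begin

lemma ultraD:
  assumes "ultrametric X" "x\<in>X" "y\<in>X" "z\<in>X"
  shows "dist x z \<le> max (dist x y) (dist y z)"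
  using assms unfolding ultrametric_def by blast

lemma ball_sub:
  assumes U: "ultrametric X" and X: "x\<in>X" "x'\<in>X" "z\<in>X" and d: "dist x z \<le> r" "dist x' z \<le> r"
    and y: "y \<in> X" "dist x y \<le> r"
  shows "dist x' y \<le> r"
proof -
  have "dist z y \<le> max (dist z x) (dist x y)" using ultraD[OF U X(3) X(1) y(1)] .
  then have zy: "dist z y \<le> r" using d y by (simp add: dist_commute)
  have "dist x' y \<le> max (dist x' z) (dist z y)" using ultraD[OF U X(2) X(3) y(1)] .
  then show ?thesis using zy d by simp
qed

lemma ball_eq:
  assumes U: "ultrametric X" and X: "x\<in>X" "x'\<in>X" "z\<in>X" and d: "dist x z \<le> r" "dist x' z \<le> r"
  shows "{y\<in>X. dist x y \<le> r} = {y\<in>X. dist x' y \<le> r}"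
  using ball_sub[OF U X d] ball_sub[OF U X(2,1,3) d(2,1)] by blast

lemma lvl_inter:
  assumes U: "ultrametric X" and B: "B \<in> lvl X n" "B' \<in> lvl X n" and z: "z \<in> B" "z \<in> B'"
  shows "B = B'"
proof -
  obtain x where x: "x \<in> X" "B = {y\<in>X. dist x y \<le> rad X n}" using B(1) unfolding lvl_def by blast
  obtain x' where x': "x' \<in> X" "B' = {y\<in>X. dist x' y \<le> rad X n}" using B(2) unfolding lvl_def by blast
  show ?thesis using ball_eq[OF U x(1) x'(1), of z "rad X n"] x x' z by auto
qed

lemma lvl_neg:
  assumes "rad X n < 0" "B \<in> lvl X n" shows "B = {}"
  using assms unfolding lvl_def by (auto, smt (verit) zero_le_dist)

lemma lvl_nonneg:
  assumes "0 \<le> rad X n" "B \<in> lvl X n" shows "B \<noteq> {}"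
  using assms unfolding lvl_def by auto

lemma path_mono:
  assumes "p \<in> mpaths X" "m \<le> n" shows "p n \<subseteq> p m"
  using assms(2)
proof (induction n rule: dec_induct)
  case base then show ?case by simp
next
  case (step n) then show ?case using assms(1) unfolding mpaths_def by blast
qed

lemma path_lvl: "p \<in> mpaths X \<Longrightarrow> p n \<in> lvl X n"
  unfolding mpaths_def by blast

lemma child_lvl: "c \<in> mchildren X u \<Longrightarrow> fst c = Suc (fst u) \<and> snd c \<in> lvl X (Suc (fst u)) \<and> snd c \<subseteq> snd u"
  unfolding mchildren_def by auto

lemma child_mvert: "c \<in> mchildren X u \<Longrightarrow> c \<in> mvert X"
  unfolding mchildren_def mvert_def by auto

lemma branching_children_nonempty:
  assumes "branching X u" "c \<in> mchildren X u" shows "snd c \<noteq> {}"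
proof -
  obtain a b where ab: "a \<noteq> b" "a \<in> mchildren X u" "b \<in> mchildren X u"
    using assms(1) unfolding branching_def by blast
  have "0 \<le> rad X (Suc (fst u))"
  proof (rule ccontr)
    assume "\<not> ?thesis"
    then have "snd a = {}" "snd b = {}" using lvl_neg child_lvl ab by (metis not_le)+
    moreover have "fst a = fst b" using child_lvl[OF ab(2)] child_lvl[OF ab(3)] by simp
    ultimately show False using ab(1) by (simp add: prod_eq_iff)
  qed
  then show ?thesis using lvl_nonneg child_lvl assms(2) by blast
qed

lemma child_path:
  assumes U: "ultrametric X" and u: "branching X u" and c: "c \<in> mchildren X u"
    and p: "p \<in> mpaths X" "passes p c"
  shows "p (fst u) = snd u"
proof -
  obtain z where z: "z \<in> snd c" using branching_children_nonempty[OF u c] by blast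
  have "p (Suc (fst u)) = snd c" using p(2) child_lvl[OF c] unfolding passes_def by simp
  then have "z \<in> p (fst u)" using path_mono[OF p(1), of "fst u" "Suc (fst u)"] z by auto
  moreover have "z \<in> snd u" using child_lvl[OF c] z by auto
  moreover have "snd u \<in> lvl X (fst u)" using u unfolding branching_def mvert_def by auto
  ultimately show ?thesis using lvl_inter[OF U path_lvl[OF p(1)]] by blast
qed


lemma fin_above:
  assumes K: "compact X" and U: "ultrametric X" and r: "0 < r"
  shows "finite {s\<in>dvals X. r < s}"
proof -
  have "X \<subseteq> (\<Union>c\<in>X. ball c r)" using r by auto
  then obtain C where C: "C \<subseteq> X" "finite C" "X \<subseteq> (\<Union>c\<in>C. ball c r)"
    using compactE_image[OF K, of X "\<lambda>c. ball c r"] by blast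
  have "{s\<in>dvals X. r < s} \<subseteq> (\<lambda>(c,d). dist c d) ` (C \<times> C)"
  proof
    fix s assume "s \<in> {s\<in>dvals X. r < s}"
    then obtain x y where xy: "x \<in> X" "y \<in> X" "s = dist x y" "r < s" unfolding dvals_def by blast
    obtain c1 where c1: "c1 \<in> C" "dist c1 x < r" using C xy by auto
    obtain c2 where c2: "c2 \<in> C" "dist c2 y < r" using C xy by auto
    have cX: "c1 \<in> X" "c2 \<in> X" using C c1 c2 by auto
    have "dist x y \<le> max (dist x c1) (dist c1 y)" using ultraD[OF U xy(1) cX(1) xy(2)] .
    moreover have "dist c1 y \<le> max (dist c1 c2) (dist c2 y)" using ultraD[OF U cX xy(2)] .
    ultimately have le1: "dist x y \<le> dist c1 c2" using xy c1 c2 by (auto simp: dist_commute)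
    have "dist c1 c2 \<le> max (dist c1 x) (dist x c2)" using ultraD[OF U cX(1) xy(1) cX(2)] .
    moreover have "dist x c2 \<le> max (dist x y) (dist y c2)" using ultraD[OF U xy(1) xy(2) cX(2)] .
    ultimately have "dist c1 c2 \<le> dist x y" using xy c1 c2 le1 by (auto simp: dist_commute)
    then have "s = (\<lambda>(c,d). dist c d) (c1, c2)" using le1 xy by simp
    then show "s \<in> (\<lambda>(c,d). dist c d) ` (C \<times> C)" using c1 c2 by blast
  qed
  then show ?thesis using C(2) finite_subset by blast
qed

lemma rad_eq:
  assumes K: "compact X" and U: "ultrametric X" and r: "r \<in> dvals X" "0 < r"
    and n: "card {s\<in>dvals X. r < s} = n"
  shows "rad X n = r"
  unfolding rad_def
proof (rule the_equality)
  show "r \<in> dvals X \<and> 0 < r \<and> finite {s \<in> dvals X. r < s} \<and> card {s \<in> dvals X. r < s} = n"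
    using r n fin_above[OF K U r(2)] by blast
next
  fix r' assume r': "r' \<in> dvals X \<and> 0 < r' \<and> finite {s \<in> dvals X. r' < s} \<and> card {s \<in> dvals X. r' < s} = n"
  have "\<not> r < r'"
  proof
    assume "r < r'"
    then have "{s \<in> dvals X. r' < s} \<subset> {s \<in> dvals X. r < s}" using r' by auto
    then have "card {s \<in> dvals X. r' < s} < card {s \<in> dvals X. r < s}"
      using fin_above[OF K U r(2)] psubset_card_mono by blast
    then show False using r' n by simp
  qed
  moreover have "\<not> r' < r"
  proof
    assume "r' < r"
    then have "{s \<in> dvals X. r < s} \<subset> {s \<in> dvals X. r' < s}" using r by auto
    then have "card {s \<in> dvals X. r < s} < card {s \<in> dvals X. r' < s}"
      using r' psubset_card_mono by blast
    then show False using r' n by simp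
  qed
  ultimately show "r' = r" by simp
qed

lemma branching_exists:
  assumes K: "compact X" and I: "infinite X" and U: "ultrametric X"
  shows "\<exists>v. branching X v"
proof -
  obtain x0 where x0: "x0 \<in> X" "x0 islimpt X"
    using Heine_Borel_imp_Bolzano_Weierstrass[OF K I] by blast
  obtain x1 where x1: "x1 \<in> X" "x1 \<noteq> x0" using x0(2) unfolding islimpt_approachable
    by (meson zero_less_one)
  define r0 where "r0 = dist x1 x0"
  have r0: "0 < r0" "r0 \<in> dvals X" using x1 x0 unfolding r0_def dvals_def by auto
  obtain x2 where x2: "x2 \<in> X" "x2 \<noteq> x0" "dist x2 x0 < r0" using x0(2) r0 unfolding islimpt_approachable
    by blast
  define s0 where "s0 = dist x2 x0"
  have s0: "0 < s0" "s0 \<in> dvals X" "s0 < r0" using x2 x0 unfolding s0_def dvals_def by auto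
  define T where "T = {s\<in>dvals X. s0 \<le> s \<and> s < r0}"
  have "T \<subseteq> {s\<in>dvals X. s0/2 < s}" unfolding T_def using s0 by auto
  then have finT: "finite T" using fin_above[OF K U, of "s0/2"] s0 finite_subset by auto
  have "s0 \<in> T" unfolding T_def using s0 by auto
  define r where "r = Max T"
  have rT: "r \<in> T" unfolding r_def using finT \<open>s0 \<in> T\<close> Max_in by blast
  have rmax: "\<And>s. s \<in> T \<Longrightarrow> s \<le> r" unfolding r_def using finT Max_ge by blast
  have r: "r \<in> dvals X" "0 < r" "r < r0" using rT s0 unfolding T_def by auto
  have above: "{s\<in>dvals X. r < s} = insert r0 {s\<in>dvals X. r0 < s}"
  proof (rule set_eqI, rule iffI)
    fix s assume s: "s \<in> {s\<in>dvals X. r < s}"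
    have "\<not> s < r0"
    proof
      assume "s < r0"
      then have "s \<in> T" unfolding T_def using s rT unfolding T_def by auto
      then show False using rmax s by force
    qed
    then show "s \<in> insert r0 {s\<in>dvals X. r0 < s}" using s by auto
  next
    fix s assume "s \<in> insert r0 {s\<in>dvals X. r0 < s}"
    then show "s \<in> {s\<in>dvals X. r < s}" using r r0 by auto
  qed
  define k where "k = card {s\<in>dvals X. r0 < s}"
  have rk: "rad X k = r0" using rad_eq[OF K U r0(2) r0(1)] k_def by simp
  have "card {s\<in>dvals X. r < s} = Suc k"
    unfolding above k_def using fin_above[OF K U r0(1)] by simp
  then have rk1: "rad X (Suc k) = r" using rad_eq[OF K U r(1) r(2)] by simp
  define v where "v = (k, {y\<in>X. dist x1 y \<le> r0})"
  define a where "a = (Suc k, {y\<in>X. dist x1 y \<le> r})"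
  define b where "b = (Suc k, {y\<in>X. dist x0 y \<le> r})"
  have "v \<in> mvert X" unfolding v_def mvert_def lvl_def using x1 rk by auto
  moreover have "a \<noteq> b"
  proof
    assume "a = b"
    then have "x0 \<in> {y\<in>X. dist x1 y \<le> r}" unfolding a_def b_def using x0 r by auto
    then show False using r r0_def by auto
  qed
  moreover have "a \<in> mchildren X v" unfolding a_def v_def mchildren_def lvl_def using x1 r rk1
    by auto
  moreover have "b \<in> mchildren X v"
  proof -
    have "{y\<in>X. dist x0 y \<le> r} \<subseteq> {y\<in>X. dist x1 y \<le> r0}"
    proof
      fix y assume y: "y \<in> {y\<in>X. dist x0 y \<le> r}"
      have "dist x1 y \<le> max (dist x1 x0) (dist x0 y)" using ultraD[OF U x1(1) x0(1)] y by auto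
      then show "y \<in> {y\<in>X. dist x1 y \<le> r0}" using y r r0_def by auto
    qed
    then show ?thesis unfolding b_def v_def mchildren_def lvl_def using x0 rk1 by auto
  qed
  ultimately show ?thesis unfolding branching_def by blast
qed


lemma choiceD:
  assumes "choice_fun X \<tau>" "c \<in> mchildren X u"
  shows "\<tau> c \<in> mpaths X" "passes (\<tau> c) c"
  using assms child_mvert unfolding choice_fun_def by blast+

lemma edge_zero:
  assumes U: "ultrametric X" and ch: "choice_fun X \<tau>" and v: "branching X v"
    and a: "a \<in> mchildren X v" and mn: "\<forall>u. branching X u \<longrightarrow> fst v \<le> fst u"
    and u: "branching X u" "u \<noteq> v" and c: "c \<in> mchildren X u" and d: "d \<in> mchildren X u"
  shows "(\<tau> c (fst a) = snd a) = (\<tau> d (fst a) = snd a)"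
proof (cases "fst a \<le> fst u")
  case True
  have pc: "\<tau> c (fst u) = snd u" using child_path[OF U u(1) c choiceD[OF ch c]] .
  have pd: "\<tau> d (fst u) = snd u" using child_path[OF U u(1) d choiceD[OF ch d]] .
  obtain z where z: "z \<in> snd c" using branching_children_nonempty[OF u(1) c] by blast
  then have zu: "z \<in> snd u" using child_lvl[OF c] by auto
  have "z \<in> \<tau> c (fst a)" using path_mono[OF choiceD(1)[OF ch c] True] pc zu by auto
  moreover have "z \<in> \<tau> d (fst a)" using path_mono[OF choiceD(1)[OF ch d] True] pd zu by auto
  ultimately have "\<tau> c (fst a) = \<tau> d (fst a)"
    using lvl_inter[OF U path_lvl[OF choiceD(1)[OF ch c]] path_lvl[OF choiceD(1)[OF ch d]]] by blast
  then show ?thesis by simp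
next
  case False
  have fa: "fst a = Suc (fst v)" using child_lvl[OF a] by simp
  have "fst v \<le> fst u" using mn u(1) by blast
  then have fu: "fst u = fst v" using False fa by simp
  have su: "snd u \<noteq> snd v" using fu u(2) by (simp add: prod_eq_iff)
  have vl: "snd v \<in> lvl X (fst u)" using v fu unfolding branching_def mvert_def by auto
  have ul: "snd u \<in> lvl X (fst u)" using u unfolding branching_def mvert_def by auto
  obtain z where z: "z \<in> snd a" using branching_children_nonempty[OF v a] by blast
  have zv: "z \<in> snd v" using z child_lvl[OF a] by auto
  have gen: "\<tau> e (fst a) \<noteq> snd a" if e: "e \<in> mchildren X u" for e
  proof
    assume eq: "\<tau> e (fst a) = snd a"
    have pe: "\<tau> e (fst u) = snd u" using child_path[OF U u(1) e choiceD[OF ch e]] .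
    have "fst u \<le> fst a" using False by simp
    then have "z \<in> snd u" using path_mono[OF choiceD(1)[OF ch e]] pe eq z by blast
    then show False using lvl_inter[OF U ul vl _ zv] su by blast
  qed
  show ?thesis using gen[OF c] gen[OF d] by simp
qed

theorem mainTheorem3:
  fixes X :: "'a::metric_space set"
    and \<tau> :: "nat \<times> 'a set \<Rightarrow> (nat \<Rightarrow> 'a set)"
    and H Hp :: "((nat \<times> 'a set) \<times> (nat \<times> 'a set)) set"
  assumes "compact X" and "infinite X" and "ultrametric X"
    and "choice_fun X \<tau>"
    and "min_horizontal X H"
    and "orientation H Hp"
  shows "\<exists>f. contZ X f \<and> phi \<tau> Hp f \<noteq> 0"
proof -
  note U = assms(3) and ch = assms(4)
  obtain sel where sel: "\<And>v. branching X v \<Longrightarrow> fst (sel v) \<noteq> snd (sel v) \<and>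
            fst (sel v) \<in> mchildren X v \<and> snd (sel v) \<in> mchildren X v"
    and H: "H = (\<Union>v\<in>{v. branching X v}. {sel v, prod.swap (sel v)})"
    using assms(5) unfolding min_horizontal_def by blast
  obtain v0 where "branching X v0" using branching_exists[OF assms(1-3)] by blast
  define m where "m = (LEAST n. \<exists>v. branching X v \<and> fst v = n)"
  have "\<exists>v. branching X v \<and> fst v = m"
    unfolding m_def by (rule LeastI[of _ "fst v0"]) (use \<open>branching X v0\<close> in blast)
  then obtain v where v: "branching X v" "fst v = m" by blast
  have mn: "\<forall>u. branching X u \<longrightarrow> fst v \<le> fst u"
    using v(2) unfolding m_def by (auto intro: Least_le)
  obtain a b where ab: "sel v = (a, b)" by (cases "sel v")
  have a: "a \<in> mchildren X v" and b: "b \<in> mchildren X v" and ab_ne: "a \<noteq> b"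
    using sel[OF v(1)] ab by auto
  define f :: "(nat \<Rightarrow> 'a set) \<Rightarrow> int" where "f p = (if p (fst a) = snd a then 1 else 0)" for p
  have cz: "contZ X f" unfolding contZ_def
    by (intro ballI exI[of _ "fst a"]) (simp add: f_def)
  have fa: "f (\<tau> a) = 1" using choiceD[OF ch a] unfolding f_def passes_def by simp
  have fb: "f (\<tau> b) = 0"
  proof -
    have "fst b = fst a" using child_lvl[OF a] child_lvl[OF b] by simp
    moreover have "snd b \<noteq> snd a" using ab_ne calculation by (auto simp: prod_eq_iff)
    ultimately show ?thesis using choiceD(2)[OF ch b] unfolding f_def passes_def by simp
  qed
  have Sdef: "{h \<in> Hp. f (\<tau> (fst h)) \<noteq> f (\<tau> (snd h))} = Hp \<inter> {(a,b), (b,a)}"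
  proof (rule set_eqI, rule iffI)
    fix h assume h: "h \<in> {h \<in> Hp. f (\<tau> (fst h)) \<noteq> f (\<tau> (snd h))}"
    then have "h \<in> H" using assms(6) unfolding orientation_def by blast
    then obtain u where u: "branching X u" "h = sel u \<or> h = prod.swap (sel u)" using H by blast
    show "h \<in> Hp \<inter> {(a,b), (b,a)}"
    proof (cases "u = v")
      case True
      then have "h = (a,b) \<or> h = (b,a)" using u(2) ab by simp
      then show ?thesis using h by blast
    next
      case False
      obtain c d where cd: "sel u = (c, d)" by (cases "sel u")
      have c: "c \<in> mchildren X u" and d: "d \<in> mchildren X u" using sel[OF u(1)] cd by auto
      have "f (\<tau> c) = f (\<tau> d)"
        using edge_zero[OF U ch v(1) a mn u(1) False c d] unfolding f_def by simp
      moreover have "h = (c,d) \<or> h = (d,c)" using u(2) cd by simp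
      ultimately have "f (\<tau> (fst h)) = f (\<tau> (snd h))" by (elim disjE) simp_all
      then show ?thesis using h by blast
    qed
  next
    fix h assume "h \<in> Hp \<inter> {(a,b), (b,a)}"
    moreover have "f (\<tau> (fst h)) \<noteq> f (\<tau> (snd h))"
      using calculation fa fb by (elim IntE insertE) simp_all
    ultimately show "h \<in> {h \<in> Hp. f (\<tau> (fst h)) \<noteq> f (\<tau> (snd h))}" by blast
  qed
  have abH: "(a,b) \<in> H" unfolding H
    by (rule UN_I[of v]) (simp_all add: v(1) ab)
  have "((a,b) \<in> Hp) \<noteq> (prod.swap (a,b) \<in> Hp)"
    using assms(6) abH unfolding orientation_def by blast
  then have xor: "((a,b) \<in> Hp) \<noteq> ((b,a) \<in> Hp)" by simp
  have "phi \<tau> Hp f \<noteq> 0"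
  proof (cases "(a,b) \<in> Hp")
    case True
    then have "(b,a) \<notin> Hp" using xor by simp
    then have "Hp \<inter> {(a,b), (b,a)} = {(a,b)}" using True by blast
    then show ?thesis unfolding phi_def Sdef using fa fb by simp
  next
    case False
    then have "(b,a) \<in> Hp" using xor by simp
    then have "Hp \<inter> {(a,b), (b,a)} = {(b,a)}" using False by blast
    then show ?thesis unfolding phi_def Sdef using fa fb by simp
  qed
  then show ?thesis using cz by blast
qed

end
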